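(* Let $\theta\in\mathbb{R}\setminus2\pi\mathbb{Z}$, $a\in\mathbb{C}\setminus\{0\}$, and let $G\subset\mathcal{H}(1,\mathbb{C})$ be the group generated by $h:z\mapsto e^{i\theta}z$ and $f=(a,e^{i\theta}):z\mapsto e^{i\theta}(z-a)+a$. Then exactly one of the following holds: (i) every orbit of $G$ is dense in $\mathbb{C}$; this is the case if and only if $\theta\notin H_2\cup H_3$ (equivalently $f\notin\mathcal{SR}_1$); (ii) every orbit of $G$ is closed and discrete in $\mathbb{C}$; this is the case if and only if $\theta\in H_2\cup H_3$ (equivalently $f\in\mathcal{SR}_1$).
   Context: $\mathcal{H}(1,\mathbb{C})$ is the group of maps $z\mapsto\lambda z+b$ of $\mathbb{C}$, $\lambda\in\mathbb{C}^*$, $b\in\mathbb{C}$. $H_2=(\frac{\pi}{2}+\pi\mathbb{Z})\cup\pi\mathbb{Z}$, $F_2=\{e^{ix}:x\in H_2\}$, $H_3=(\frac{\pi}{3}+\pi\mathbb{Z})\cup(-\frac{\pi}{3}+\pi\mathbb{Z})\cup\pi\mathbb{Z}$, $F_3=\{e^{ix}:x\in H_3\}$, $\mathcal{SR}_1=\{z\mapsto\lambda z+b:\ \lambda\in F_2\cup F_3,\ b\in\mathbb{C}\}$. Orbits: $G(z)=\{g(z):g\in G\}$. *)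

theory Defs
  imports "HOL-Analysis.Analysis"
begin

definition aff :: "complex \<Rightarrow> complex \<Rightarrow> complex \<Rightarrow> complex" where
  "aff l b = (\<lambda>z. l * z + b)"

inductive_set gen_group :: "(complex \<Rightarrow> complex) set \<Rightarrow> (complex \<Rightarrow> complex) set"
  for S where
    gen_id: "id \<in> gen_group S"
  | gen_base: "s \<in> S \<Longrightarrow> s \<in> gen_group S"
  | gen_inv: "s \<in> S \<Longrightarrow> inv s \<in> gen_group S"
  | gen_comp: "g1 \<in> gen_group S \<Longrightarrow> g2 \<in> gen_group S \<Longrightarrow> g1 \<circ> g2 \<in> gen_group S"

definition orbit :: "(complex \<Rightarrow> complex) set \<Rightarrow> complex \<Rightarrow> complex set" where
  "orbit G z = {g z | g. g \<in> G}"

definition H2 :: "real set" where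
  "H2 = {pi/2 + pi * of_int k | k. True} \<union> {pi * of_int k | k. True}"

definition H3 :: "real set" where
  "H3 = {pi/3 + pi * of_int k | k. True} \<union> {- pi/3 + pi * of_int k | k. True}
        \<union> {pi * of_int k | k. True}"

definition F2 :: "complex set" where
  "F2 = {cis x | x. x \<in> H2}"

definition F3 :: "complex set" where
  "F3 = {cis x | x. x \<in> H3}"

definition SR1 :: "(complex \<Rightarrow> complex) set" where
  "SR1 = {aff l b | l b. l \<in> F2 \<union> F3}"

definition closed_discrete :: "complex set \<Rightarrow> bool" where
  "closed_discrete A \<longleftrightarrow> closed A \<and> (\<forall>x\<in>A. \<exists>e>0. ball x e \<inter> A = {x})"

end

theory Submission
  imports Defs
begin


lemma cos_eq_real: fixes x y :: real assumes "cos x = cos y"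
  shows "\<exists>i::int. x = y + 2*pi*i \<or> x = -y + 2*pi*i"
proof -
  have "sin ((x + y)/2) = 0 \<or> sin ((y - x)/2) = 0"
    using assms cos_diff_cos[of x y] by auto
  then show ?thesis
  proof
    assume "sin ((x + y)/2) = 0"
    then obtain i::int where "(x+y)/2 = i * pi" by (auto simp: sin_zero_iff_int2)
    then have "x = -y + 2*pi*i" by (simp add: field_simps)
    then show ?thesis by blast
  next
    assume "sin ((y - x)/2) = 0"
    then obtain i::int where "(y-x)/2 = i * pi" by (auto simp: sin_zero_iff_int2)
    then have "x = y + 2*pi*(-i)" by (simp add: field_simps)
    then show ?thesis by blast
  qed
qed

lemma cos_add_int_pi: "cos (y + pi * of_int k) = cos y \<or> cos (y + pi * of_int k) = - cos y"
proof -
  have s0: "sin (pi * of_int k) = 0" by (simp add: sin_zero_iff_int2 mult.commute)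
  hence "cos (pi * of_int k)^2 = 1" using sin_cos_squared_add[of "pi * of_int k"] by simp
  hence "cos (pi * of_int k) = 1 \<or> cos (pi * of_int k) = -1" by (simp add: power2_eq_1_iff)
  thus ?thesis by (auto simp: cos_add s0)
qed


lemma H_cases: assumes "x \<in> H2 \<union> H3"
  shows "\<exists>y k. x = y + pi * of_int k \<and> y \<in> {pi/2, 0, pi/3, -pi/3}"
proof -
  have "x \<in> {pi/2 + pi * of_int k | k. True} \<or> x \<in> {pi * of_int k | k. True} \<or>
        x \<in> {pi/3 + pi * of_int k | k. True} \<or> x \<in> {- pi/3 + pi * of_int k | k. True}"
    using assms unfolding H2_def H3_def by blast
  thus ?thesis
  proof (elim disjE)
    assume "x \<in> {pi * of_int k | k. True}"
    then obtain k where "x = 0 + pi * of_int k" by auto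
    thus ?thesis by blast
  qed blast+
qed

lemma H_cos: assumes "\<theta> \<in> H2 \<union> H3" shows "\<exists>c::int. 2 * cos \<theta> = of_int c"
proof -
  obtain y k where th: "\<theta> = y + pi * of_int k" and y: "y \<in> {pi/2, 0, pi/3, -pi/3}"
    using H_cases[OF assms] by blast
  have "2 * cos y \<in> {0, 2, 1, -1}"
  proof -
    have yy: "y = pi/2 \<or> y = 0 \<or> y = pi/3 \<or> y = -pi/3" using y by blast
    have c3: "cos (-pi/3) = 1/2" by (metis cos_60 cos_minus minus_divide_left)
    show ?thesis using yy by (elim disjE; simp only: c3 cos_60 cos_pi_half cos_zero; simp)
  qed
  then obtain c::int where "2 * cos y = of_int c" by (metis (mono_tags) empty_iff insertE of_int_0 of_int_1 of_int_numeral of_int_minus)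
  with cos_add_int_pi[of y k] th show ?thesis
    by (metis minus_mult_right mult_minus_right of_int_minus)
qed

lemma cos_H: assumes "2 * cos \<theta> = of_int c" shows "\<theta> \<in> H2 \<union> H3"
proof -
  have "\<bar>of_int c\<bar> = 2 * \<bar>cos \<theta>\<bar>" using assms[symmetric] by (simp add: abs_mult)
  hence "\<bar>of_int c\<bar> \<le> (2::real)" using abs_cos_le_one[of \<theta>] by linarith
  hence "c \<in> {-2,-1,0,1,2}" by auto
  moreover {
    assume "c = 2" hence "cos \<theta> = 1" using assms by simp
    then obtain n::int where "\<theta> = n*2*pi" by (auto simp: cos_one_2pi_int)
    hence "\<theta> = pi * of_int (2*n)" by simp
    hence ?thesis unfolding H2_def by blast }
  moreover {
    assume "c = -2" hence "cos \<theta> = -1" using assms by simp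
    then obtain n::int where "\<theta> = (2*n+1)*pi" by (auto simp: cos_eq_minus1)
    hence "\<theta> = pi * of_int (2*n+1)" by simp
    hence ?thesis unfolding H2_def by blast }
  moreover {
    assume "c = 0" hence "cos \<theta> = 0" using assms by simp
    then obtain i::int where "odd i" "\<theta> = of_int i * (pi/2)" by (auto simp: cos_zero_iff_int)
    then obtain m where "i = 2*m+1" by (metis oddE)
    hence "\<theta> = pi/2 + pi * of_int m" using \<open>\<theta> = _\<close> by (simp add: field_simps)
    hence ?thesis unfolding H2_def by blast }
  moreover {
    assume "c = 1" hence "cos \<theta> = cos (pi/3)" using assms by (simp add: cos_60)
    then obtain i::int where "\<theta> = pi/3 + 2*pi*i \<or> \<theta> = -(pi/3) + 2*pi*i" using cos_eq_real by blast
    hence "\<theta> = pi/3 + pi * of_int (2*i) \<or> \<theta> = -pi/3 + pi * of_int (2*i)" by (auto simp: algebra_simps)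
    hence ?thesis unfolding H3_def by blast }
  moreover {
    assume "c = -1" hence "cos \<theta> = cos (pi - pi/3)" using assms by (simp add: cos_60 cos_120)
    then obtain i::int where "\<theta> = (pi - pi/3) + 2*pi*i \<or> \<theta> = -(pi - pi/3) + 2*pi*i" using cos_eq_real by blast
    hence "\<theta> = -pi/3 + pi * of_int (2*i+1) \<or> \<theta> = pi/3 + pi * of_int (2*i - 1)" by (auto simp: field_simps)
    hence ?thesis unfolding H3_def by blast }
  ultimately show ?thesis by blast
qed

lemma H_in: assumes "y \<in> {pi/2, 0, pi/3, -pi/3}" shows "y + pi * of_int k \<in> H2 \<union> H3"
proof -
  consider "y = pi/2" | "y = 0" | "y = pi/3" | "y = -pi/3" using assms by blast
  thus ?thesis
  proof cases
    case 1 thus ?thesis unfolding H2_def by blast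
  next
    case 2 thus ?thesis unfolding H2_def by auto
  next
    case 3 thus ?thesis unfolding H3_def by blast
  next
    case 4 thus ?thesis unfolding H3_def by blast
  qed
qed

lemma H_shift: assumes "x \<in> H2 \<union> H3" shows "x + 2*pi * of_int n \<in> H2 \<union> H3"
proof -
  obtain y k where th: "x = y + pi * of_int k" and y: "y \<in> {pi/2, 0, pi/3, -pi/3}"
    using H_cases[OF assms] by blast
  hence "x + 2*pi * of_int n = y + pi * of_int (k + 2*n)" by (simp add: algebra_simps)
  thus ?thesis using H_in[OF y] by metis
qed

lemma cis_eq_H: assumes "cis x = cis \<theta>" "x \<in> H2 \<union> H3" shows "\<theta> \<in> H2 \<union> H3"
proof -
  have "cis (\<theta> - x) = 1" using assms by (simp add: cis_divide[symmetric])
  hence "cos (\<theta> - x) = 1" by (metis Re_complex_of_real cis.sel(1) of_real_1)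
  then obtain n::int where "\<theta> - x = n*2*pi" by (auto simp: cos_one_2pi_int)
  hence "\<theta> = x + n*2*pi" by linarith
  hence "\<theta> = x + 2*pi * of_int n" by (simp add: mult_ac)
  thus ?thesis using H_shift assms(2) by simp
qed



inductive_set Rg :: "complex \<Rightarrow> complex set" for l where
  R1: "1 \<in> Rg l"
| Radd: "x \<in> Rg l \<Longrightarrow> y \<in> Rg l \<Longrightarrow> x + y \<in> Rg l"
| Rneg: "x \<in> Rg l \<Longrightarrow> - x \<in> Rg l"
| Rml: "x \<in> Rg l \<Longrightarrow> l * x \<in> Rg l"
| Rdl: "x \<in> Rg l \<Longrightarrow> x / l \<in> Rg l"

lemma Rg_mult: assumes "x \<in> Rg l" "y \<in> Rg l" shows "x * y \<in> Rg l"
  using assms(1)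
proof induction
  case R1 thus ?case using assms(2) by simp
next
  case (Radd x1 x2) thus ?case by (simp add: distrib_right Rg.Radd)
next
  case (Rneg x) thus ?case using Rg.Rneg by fastforce
next
  case (Rml x) thus ?case using Rg.Rml by (fastforce simp: mult.assoc)
next
  case (Rdl x) thus ?case using Rg.Rdl by (fastforce simp: times_divide_eq_left)
qed

lemma Rg_0: "0 \<in> Rg l" using Rg.Radd[OF R1 Rg.Rneg[OF R1]] by simp

lemma Rg_nat: "of_nat n \<in> Rg l"
  by (induction n) (auto simp: Rg_0 intro: Rg.Radd Rg.R1)

lemma Rg_int: "of_int k \<in> Rg l"
proof (cases "k \<ge> 0")
  case True then obtain n where "k = int n" by (metis nonneg_eq_int)
  thus ?thesis using Rg_nat by simp
next
  case False then obtain n where "k = - int n" by (metis le_cases neg_0_le_iff_le nonpos_int_cases)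
  thus ?thesis using Rg_nat[of n] Rg.Rneg by fastforce
qed

lemma Rg_pow: "x \<in> Rg l \<Longrightarrow> x ^ n \<in> Rg l"
  by (induction n) (auto intro: Rg.R1 Rg_mult)

lemma Rg_l: "l \<in> Rg l" using Rg.Rml[OF R1] by simp
lemma Rg_il: "1 / l \<in> Rg l" using Rg.Rdl[OF R1] by simp

definition hh :: "complex \<Rightarrow> complex \<Rightarrow> complex" where "hh l = (\<lambda>z. l * z)"
definition ff :: "complex \<Rightarrow> complex \<Rightarrow> complex \<Rightarrow> complex" where "ff l a = (\<lambda>z. l * (z - a) + a)"
definition tt :: "complex \<Rightarrow> complex \<Rightarrow> complex" where "tt l a = a * (1 / l - 1)"
abbreviation GG where "GG l a \<equiv> gen_group {hh l, ff l a}"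

lemma inv_hh: assumes "l \<noteq> 0" shows "bij (hh l)" "inv (hh l) = (\<lambda>z. z / l)"
proof -
  have 1: "hh l \<circ> (\<lambda>z. z / l) = id" "(\<lambda>z. z / l) \<circ> hh l = id"
    using assms by (auto simp: hh_def fun_eq_iff)
  show "bij (hh l)" using o_bij[OF 1(2) 1(1)] .
  show "inv (hh l) = (\<lambda>z. z / l)" using inv_unique_comp[OF 1(1) 1(2)] .
qed

lemma inv_ff: assumes "l \<noteq> 0" shows "bij (ff l a)" "inv (ff l a) = (\<lambda>z. (z - a) / l + a)"
proof -
  have 1: "ff l a \<circ> (\<lambda>z. (z - a) / l + a) = id" "(\<lambda>z. (z - a) / l + a) \<circ> ff l a = id"
    using assms by (auto simp: ff_def fun_eq_iff)
  show "bij (ff l a)" using o_bij[OF 1(2) 1(1)] .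
  show "inv (ff l a) = (\<lambda>z. (z - a) / l + a)" using inv_unique_comp[OF 1(1) 1(2)] .
qed

lemma G_inv: assumes "l \<noteq> 0" "g \<in> GG l a" shows "bij g \<and> inv g \<in> GG l a"
  using assms(2)
proof induction
  case gen_id thus ?case by (metis bij_id inv_id gen_group.gen_id)
next
  case (gen_base s)
  thus ?case using inv_hh[OF assms(1)] inv_ff[OF assms(1), of a] by (auto intro: gen_group.gen_inv)
next
  case (gen_inv s)
  hence b: "bij s" using inv_hh[OF assms(1)] inv_ff[OF assms(1), of a] by auto
  thus ?case using gen_inv by (simp add: bij_imp_bij_inv inv_inv_eq gen_group.gen_base)
next
  case (gen_comp g1 g2)
  thus ?case by (metis bij_comp o_inv_distrib gen_group.gen_comp)
qed

lemma tau_G: assumes "l \<noteq> 0" "r \<in> Rg l" shows "(\<lambda>z. z + tt l a * r) \<in> GG l a"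
  using assms(2)
proof induction
  case R1
  have "(\<lambda>z. z + tt l a * 1) = inv (hh l) \<circ> ff l a"
    unfolding inv_hh(2)[OF assms(1)] using assms(1) by (auto simp: tt_def ff_def fun_eq_iff field_simps)
  thus ?case by (simp add: gen_group.gen_inv gen_group.gen_base gen_group.gen_comp)
next
  case (Radd x y)
  have "(\<lambda>z. z + tt l a * (x + y)) = (\<lambda>z. z + tt l a * x) \<circ> (\<lambda>z. z + tt l a * y)"
    by (auto simp: fun_eq_iff algebra_simps)
  thus ?case using Radd by (simp add: gen_group.gen_comp)
next
  case (Rneg x)
  have "(\<lambda>z. z + tt l a * (- x)) = inv (\<lambda>z. z + tt l a * x)"
    by (rule inv_unique_comp[symmetric]) (auto simp: fun_eq_iff)
  thus ?case using G_inv[OF assms(1) Rneg.IH] by simp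
next
  case (Rml x)
  have "(\<lambda>z. z + tt l a * (l * x)) = hh l \<circ> (\<lambda>z. z + tt l a * x) \<circ> inv (hh l)"
    unfolding inv_hh(2)[OF assms(1)] using assms(1) by (auto simp: hh_def fun_eq_iff field_simps)
  thus ?case using Rml by (simp add: gen_group.gen_inv gen_group.gen_base gen_group.gen_comp)
next
  case (Rdl x)
  have "(\<lambda>z. z + tt l a * (x / l)) = inv (hh l) \<circ> (\<lambda>z. z + tt l a * x) \<circ> hh l"
    unfolding inv_hh(2)[OF assms(1)] using assms(1) by (auto simp: hh_def fun_eq_iff field_simps)
  thus ?case using Rdl by (simp add: gen_group.gen_inv gen_group.gen_base gen_group.gen_comp)
qed

lemma hpow_G: "(\<lambda>z. l ^ n * z) \<in> GG l a"
proof (induction n)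
  case 0 thus ?case using gen_group.gen_id by (simp add: id_def)
next
  case (Suc n)
  have eq: "(\<lambda>z. l ^ Suc n * z) = hh l \<circ> (\<lambda>z. l ^ n * z)" by (auto simp: hh_def fun_eq_iff)
  have hG: "hh l \<in> GG l a" by (simp add: gen_group.gen_base)
  show ?case by (subst eq) (rule gen_group.gen_comp[OF hG Suc.IH])
qed

lemma orbit_sup: assumes "l \<noteq> 0" "r \<in> Rg l" shows "l ^ n * z + tt l a * r \<in> orbit (GG l a) z"
proof -
  have "(\<lambda>z. z + tt l a * r) \<circ> (\<lambda>z. l ^ n * z) \<in> GG l a"
    using tau_G[OF assms] hpow_G by (simp add: gen_group.gen_comp)
  moreover have "((\<lambda>z. z + tt l a * r) \<circ> (\<lambda>z. l ^ n * z)) z = l ^ n * z + tt l a * r" by simp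
  ultimately show ?thesis unfolding orbit_def
    by (intro CollectI exI[of _ "(\<lambda>z. z + tt l a * r) \<circ> (\<lambda>z. l ^ n * z)"]) simp
qed



lemma cis_sum: "cis \<theta> + 1 / cis \<theta> = complex_of_real (2 * cos \<theta>)"
proof -
  have "1 / cis \<theta> = cnj (cis \<theta>)" by (simp add: cis_cnj divide_inverse)
  thus ?thesis by (simp add: complex_add_cnj)
qed

lemma small_elems:
  assumes "\<forall>c::int. 2 * cos \<theta> \<noteq> of_int c" "e > 0"
  shows "\<exists>w\<in>Rg (cis \<theta>). w \<noteq> 0 \<and> norm w < e"
proof -
  define c where "c = 2 * cos \<theta>"
  define x where "x = c - of_int \<lfloor>c\<rfloor>"
  have x0: "x > 0" using assms(1) unfolding x_def c_def
    by (metis diff_gt_0_iff_gt le_less of_int_floor_le)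
  have x1: "x < 1" unfolding x_def by linarith
  have "complex_of_real x = (cis \<theta> + 1 / cis \<theta>) + - of_int \<lfloor>c\<rfloor>"
    unfolding x_def c_def cis_sum by simp
  hence xR: "complex_of_real x \<in> Rg (cis \<theta>)"
    by (metis Rg.Radd Rg.Rneg Rg_int Rg_il Rg_l)
  obtain n where "x ^ n < e" using real_arch_pow_inv[OF assms(2) x1] by blast
  moreover have "complex_of_real (x ^ n) \<in> Rg (cis \<theta>)" using Rg_pow[OF xR] by simp
  moreover have "norm (complex_of_real (x ^ n)) = x ^ n" using x0 by (simp only: norm_of_real) simp
  moreover have "complex_of_real (x ^ n) \<noteq> 0" using x0 by (simp only: of_real_eq_0_iff) simp
  ultimately show ?thesis by metis
qed

lemma dense_orbit:
  assumes sn: "sin \<theta> \<noteq> 0" and t0: "tt (cis \<theta>) a \<noteq> 0"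
    and small: "\<And>e. e > 0 \<Longrightarrow> \<exists>w\<in>Rg (cis \<theta>). w \<noteq> 0 \<and> norm w < e"
  shows "closure (orbit (GG (cis \<theta>) a) z) = UNIV"
proof -
  define l where "l = cis \<theta>"
  define t where "t = tt l a"
  have l0: "l \<noteq> 0" unfolding l_def by simp
  have nl: "norm l = 1" unfolding l_def by simp
  have "y \<in> closure (orbit (GG l a) z)" for y
    unfolding closure_approachable
  proof (intro allI impI)
    fix e :: real assume e: "e > 0"
    have tp: "norm t > 0" using t0 unfolding t_def l_def by simp
    obtain w where wR: "w \<in> Rg l" and w0: "w \<noteq> 0" and wn: "norm w < e / (2 * norm t)"
      using small[of "e / (2 * norm t)"] e tp unfolding l_def by auto
    define u where "u = t * w"
    have u0: "u \<noteq> 0" using w0 tp unfolding u_def by auto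
    have nu: "norm u < e / 2" using wn tp unfolding u_def by (simp add: norm_mult field_simps)
    define d where "d = (y - z) / u"
    define \<beta> where "\<beta> = Im d / sin \<theta>"
    define \<alpha> where "\<alpha> = Re d - \<beta> * cos \<theta>"
    have deq: "d = complex_of_real \<alpha> + complex_of_real \<beta> * l"
      unfolding l_def \<alpha>_def \<beta>_def using sn by (intro complex_eqI) auto
    define r where "r = (of_int \<lfloor>\<alpha>\<rfloor> + of_int \<lfloor>\<beta>\<rfloor> * l) * w"
    have rR: "r \<in> Rg l" unfolding r_def
      by (intro Rg_mult wR Rg.Radd Rg_int Rg_l)
    have p: "l ^ 0 * z + t * r \<in> orbit (GG l a) z" unfolding t_def using orbit_sup[OF l0 rR] .
    have "l ^ 0 * z + t * r - y = u * ((of_int \<lfloor>\<alpha>\<rfloor> - of_real \<alpha>) + (of_int \<lfloor>\<beta>\<rfloor> - of_real \<beta>) * l)"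
    proof -
      have "y = z + u * d" using u0 unfolding d_def by simp
      thus ?thesis unfolding r_def u_def deq by (simp add: algebra_simps)
    qed
    hence "dist (l ^ 0 * z + t * r) y = norm u * norm ((of_int \<lfloor>\<alpha>\<rfloor> - of_real \<alpha>) + (of_int \<lfloor>\<beta>\<rfloor> - of_real \<beta>) * l)"
      by (simp add: dist_norm norm_mult)
    also have "\<dots> \<le> norm u * (\<bar>\<lfloor>\<alpha>\<rfloor> - \<alpha>\<bar> + \<bar>\<lfloor>\<beta>\<rfloor> - \<beta>\<bar>)"
    proof (rule mult_left_mono)
      have "norm ((of_int \<lfloor>\<alpha>\<rfloor> - of_real \<alpha>) + (of_int \<lfloor>\<beta>\<rfloor> - of_real \<beta>) * l)
          \<le> norm (of_int \<lfloor>\<alpha>\<rfloor> - complex_of_real \<alpha>) + norm ((of_int \<lfloor>\<beta>\<rfloor> - complex_of_real \<beta>) * l)"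
        by (rule norm_triangle_ineq)
      also have "\<dots> = \<bar>\<lfloor>\<alpha>\<rfloor> - \<alpha>\<bar> + \<bar>\<lfloor>\<beta>\<rfloor> - \<beta>\<bar>"
      proof -
        have e1: "of_int \<lfloor>\<alpha>\<rfloor> - complex_of_real \<alpha> = complex_of_real (of_int \<lfloor>\<alpha>\<rfloor> - \<alpha>)" by simp
        have e2: "of_int \<lfloor>\<beta>\<rfloor> - complex_of_real \<beta> = complex_of_real (of_int \<lfloor>\<beta>\<rfloor> - \<beta>)" by simp
        show ?thesis unfolding e1 e2 norm_mult nl norm_of_real by simp
      qed
      finally show "norm ((of_int \<lfloor>\<alpha>\<rfloor> - of_real \<alpha>) + (of_int \<lfloor>\<beta>\<rfloor> - of_real \<beta>) * l) \<le> \<bar>\<lfloor>\<alpha>\<rfloor> - \<alpha>\<bar> + \<bar>\<lfloor>\<beta>\<rfloor> - \<beta>\<bar>" .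
    qed simp
    also have "\<dots> < norm u * 2"
    proof (rule mult_strict_left_mono)
      show "\<bar>\<lfloor>\<alpha>\<rfloor> - \<alpha>\<bar> + \<bar>\<lfloor>\<beta>\<rfloor> - \<beta>\<bar> < 2" by linarith
    qed (use u0 in simp)
    also have "\<dots> < e" using nu by simp
    finally show "\<exists>p\<in>orbit (GG l a) z. dist p y < e" using p by blast
  qed
  thus ?thesis unfolding l_def by auto
qed



lemma iso_or: assumes "closed_discrete B" shows "\<exists>e>0. ball x e \<inter> B \<subseteq> {x}"
proof (cases "x \<in> B")
  case True thus ?thesis using assms unfolding closed_discrete_def by blast
next
  case False
  have "open (- B)" using assms unfolding closed_discrete_def by auto
  then obtain e where "e > 0" "ball x e \<subseteq> - B" using False open_contains_ball by blast
  thus ?thesis by blast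
qed

lemma cd_Un: assumes "closed_discrete A" "closed_discrete B" shows "closed_discrete (A \<union> B)"
  unfolding closed_discrete_def
proof (intro conjI ballI)
  show "closed (A \<union> B)" using assms unfolding closed_discrete_def by auto
  fix x assume x: "x \<in> A \<union> B"
  obtain e1 where "e1 > 0" "ball x e1 \<inter> A \<subseteq> {x}" using iso_or[OF assms(1)] by blast
  moreover obtain e2 where "e2 > 0" "ball x e2 \<inter> B \<subseteq> {x}" using iso_or[OF assms(2)] by blast
  ultimately have "min e1 e2 > 0" "ball x (min e1 e2) \<inter> (A \<union> B) \<subseteq> {x}" by auto
  moreover have "x \<in> ball x (min e1 e2) \<inter> (A \<union> B)" using x \<open>min e1 e2 > 0\<close> by simp
  ultimately show "\<exists>e>0. ball x e \<inter> (A \<union> B) = {x}" by blast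
qed

lemma cd_UN: assumes "finite I" "\<forall>i\<in>I. closed_discrete (F i)" shows "closed_discrete (\<Union>i\<in>I. F i)"
  using assms
proof (induction I rule: finite_induct)
  case empty thus ?case by (simp add: closed_discrete_def)
next
  case (insert i I) thus ?case by (simp add: cd_Un)
qed

definition LL :: "complex \<Rightarrow> complex set" where
  "LL l = {of_int j + of_int k * l | j k. True}"

lemma LL_0: "0 \<in> LL l" unfolding LL_def by (intro CollectI exI[of _ 0]) simp
lemma LL_l: "l \<in> LL l" unfolding LL_def by (intro CollectI exI[of _ 0] exI[of _ 1]) simp
lemma LL_m1: "-1 \<in> LL l" unfolding LL_def by (intro CollectI exI[of _ "-1"] exI[of _ 0]) simp

lemma LL_add: "b1 \<in> LL l \<Longrightarrow> b2 \<in> LL l \<Longrightarrow> b1 + b2 \<in> LL l"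
  unfolding LL_def
proof clarify
  fix j k j' k' :: int
  show "\<exists>j2 k2. of_int j + of_int k * l + (of_int j' + of_int k' * l) = of_int j2 + of_int k2 * l \<and> True"
    by (intro exI[of _ "j + j'"] exI[of _ "k + k'"]) (simp add: algebra_simps)
qed

lemma LL_diff: "b1 \<in> LL l \<Longrightarrow> b2 \<in> LL l \<Longrightarrow> b1 - b2 \<in> LL l"
  unfolding LL_def
proof clarify
  fix j k j' k' :: int
  show "\<exists>j2 k2. of_int j + of_int k * l - (of_int j' + of_int k' * l) = of_int j2 + of_int k2 * l \<and> True"
    by (intro exI[of _ "j - j'"] exI[of _ "k - k'"]) (simp add: algebra_simps)
qed

lemma LL_mul: assumes "l \<noteq> 0" "l + 1 / l = of_int c" "b \<in> LL l" shows "l * b \<in> LL l"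
proof -
  obtain j k where b: "b = of_int j + of_int k * l" using assms(3) unfolding LL_def by blast
  have l2: "l * l = of_int c * l - 1"
  proof -
    have "l * (l + 1 / l) = l * of_int c" using assms(2) by simp
    thus ?thesis using assms(1) by (simp add: algebra_simps)
  qed
  have "l * b = of_int (-k) + of_int (j + k * c) * l"
  proof -
    have "l * b = of_int j * l + of_int k * (l * l)" unfolding b by (simp add: algebra_simps)
    also have "\<dots> = of_int (-k) + of_int (j + k * c) * l" unfolding l2 by (simp add: algebra_simps)
    finally show ?thesis .
  qed
  thus ?thesis unfolding LL_def by blast
qed

lemma LL_pow: assumes "l \<noteq> 0" "l + 1 / l = of_int c" "b \<in> LL l" shows "l ^ n * b \<in> LL l"
proof (induction n)
  case 0 thus ?case using assms(3) by simp
next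
  case (Suc n)
  have "l ^ Suc n * b = l * (l ^ n * b)" by (simp add: mult.assoc)
  thus ?case using LL_mul[OF assms(1,2) Suc.IH] by metis
qed

lemma LL_Rg: assumes "b \<in> LL l" shows "b \<in> Rg l"
proof -
  obtain j k where b: "b = of_int j + of_int k * l" using assms unfolding LL_def by blast
  show ?thesis unfolding b by (rule Rg.Radd[OF Rg_int Rg_mult[OF Rg_int Rg_l]])
qed

lemma LL_norm: assumes "norm l = 1" "l + 1 / l = of_int c" "b \<in> LL l" "b \<noteq> 0" shows "norm b \<ge> 1"
proof -
  obtain j k where b: "b = of_int j + of_int k * l" using assms(3) unfolding LL_def by blast
  have l0: "l \<noteq> 0" using assms(1) by auto
  have cl: "cnj l = 1 / l"
    using complex_norm_square[of l] assms(1) l0 by (simp add: field_simps)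
  have "complex_of_real ((norm b)\<^sup>2) = b * cnj b" by (rule complex_norm_square)
  also have "\<dots> = (of_int j + of_int k * l) * (of_int j + of_int k * (1 / l))" unfolding b by (simp add: cl)
  also have "\<dots> = of_int (j*j + k*k) + of_int (j * k) * (l + 1 / l)"
    using l0 by (simp add: field_simps)
  also have "\<dots> = of_int (j*j + k*k + j*k*c)" using assms(2) by simp
  finally have eq: "(norm b)\<^sup>2 = of_int (j*j + k*k + j*k*c)"
    by (metis of_real_eq_iff of_real_of_int_eq)
  moreover have "(norm b)\<^sup>2 > 0" using assms(4) by simp
  ultimately have "0 < j*j + k*k + j*k*c" by (metis of_int_0_less_iff)
  hence "1 \<le> j*j + k*k + j*k*c" by simp
  hence "(1::real) \<le> of_int (j*j + k*k + j*k*c)" by (simp only: of_int_1_le_iff)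
  hence "(norm b)\<^sup>2 \<ge> 1" unfolding eq .
  thus ?thesis by (metis norm_ge_zero one_power2 power2_le_imp_le)
qed

lemma cd_coset: assumes "norm l = 1" "l + 1 / l = of_int c" "t \<noteq> 0"
  shows "closed_discrete ((\<lambda>b. p + t * b) ` LL l)"
proof -
  let ?A = "(\<lambda>b. p + t * b) ` LL l"
  have sep: "dist y x \<ge> norm t" if hx: "x \<in> ?A" and hy: "y \<in> ?A" and ne: "y \<noteq> x" for x y
  proof -
    obtain b1 b2 where b: "b1 \<in> LL l" "b2 \<in> LL l" "x = p + t * b1" "y = p + t * b2" using hx hy by blast
    have "b2 - b1 \<in> LL l" by (rule LL_diff[OF b(2,1)])
    moreover have "b2 - b1 \<noteq> 0" using ne b by auto
    ultimately have "norm (b2 - b1) \<ge> 1" using LL_norm[OF assms(1,2)] by blast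
    moreover have "dist y x = norm t * norm (b2 - b1)" using b by (simp add: dist_norm norm_mult flip: right_diff_distrib)
    ultimately show ?thesis using mult_left_mono[of 1 "norm (b2 - b1)" "norm t"] by simp
  qed
  have tp: "norm t > 0" using assms(3) by simp
  show ?thesis unfolding closed_discrete_def
  proof (intro conjI ballI)
    have ex: "y = x" if "x \<in> ?A" "y \<in> ?A" "dist y x < norm t" for x y
      using sep[OF that(1,2)] that(3) by (meson not_le)
    show "closed ?A" by (rule discrete_imp_closed[OF tp]) (use ex in blast)
    fix x assume x: "x \<in> ?A"
    have "ball x (norm t) \<inter> ?A \<subseteq> {x}"
    proof
      fix y assume "y \<in> ball x (norm t) \<inter> ?A"
      hence "y \<in> ?A" "dist y x < norm t" by (auto simp: dist_commute)
      thus "y \<in> {x}" using ex[OF x] by blast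
    qed
    hence "ball x (norm t) \<inter> ?A = {x}" using x tp by auto
    thus "\<exists>e>0. ball x e \<inter> ?A = {x}" using tp by blast
  qed
qed



lemma cis12: assumes "\<theta> \<in> H2 \<union> H3" shows "cis \<theta> ^ 12 = 1"
proof -
  obtain y k where th: "\<theta> = y + pi * of_int k" and y: "y \<in> {pi/2, 0, pi/3, -pi/3}"
    using H_cases[OF assms] by blast
  obtain m :: int where m: "12 * y = 2 * pi * of_int m"
  proof -
    have "y = pi/2 \<or> y = 0 \<or> y = pi/3 \<or> y = -pi/3" using y by blast
    thus ?thesis
    proof (elim disjE)
      assume "y = pi/2" thus ?thesis using that[of 3] by simp
    next
      assume "y = 0" thus ?thesis using that[of 0] by simp
    next
      assume "y = pi/3" thus ?thesis using that[of 2] by simp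
    next
      assume "y = -pi/3" thus ?thesis using that[of "-2"] by simp
    qed
  qed
  have "real 12 * \<theta> = 2 * pi * of_int (m + 6 * k)" using m th by (simp add: algebra_simps)
  have "cis \<theta> ^ 12 = cis (real 12 * \<theta>)" by (rule Complex.DeMoivre)
  hence "cis \<theta> ^ 12 = cis (2 * pi * of_int (m + 6 * k))" by (simp only: \<open>real 12 * \<theta> = _\<close>)
  also have "\<dots> = 1" by (rule cis_multiple_2pi) simp
  finally show ?thesis .
qed

lemma G_form: assumes l0: "l \<noteq> 0" and lc: "l + 1 / l = of_int c" and l12: "l ^ 12 = 1"
  and g: "g \<in> GG l a"
  shows "\<exists>n b. b \<in> LL l \<and> g = (\<lambda>z. l ^ n * z + tt l a * b)"
  using g
proof induction
  case gen_id thus ?case by (intro exI[of _ 0] exI[of _ 0]) (simp add: LL_0 fun_eq_iff)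
next
  case (gen_base s)
  moreover have "hh l = (\<lambda>z. l ^ 1 * z + tt l a * 0)" by (simp add: hh_def)
  moreover have "ff l a = (\<lambda>z. l ^ 1 * z + tt l a * l)"
    using l0 by (simp add: ff_def tt_def fun_eq_iff field_simps)
  ultimately show ?case using LL_0 LL_l by blast
next
  case (gen_inv s)
  have il: "1 / l = l ^ 11"
  proof -
    have "l * l ^ 11 = 1" using l12 by (simp add: power_Suc[symmetric] del: power_Suc)
    thus ?thesis using l0 by (simp add: field_simps)
  qed
  have "inv (hh l) = (\<lambda>z. l ^ 11 * z + tt l a * 0)"
    unfolding inv_hh(2)[OF l0] by (auto simp: fun_eq_iff il[symmetric])
  moreover have "inv (ff l a) = (\<lambda>z. l ^ 11 * z + tt l a * (-1))"
    unfolding inv_ff(2)[OF l0] using il l0 by (auto simp: fun_eq_iff tt_def field_simps)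
  ultimately show ?case using gen_inv LL_0 LL_m1 by blast
next
  case (gen_comp g1 g2)
  then obtain n1 b1 n2 b2 where b: "b1 \<in> LL l" "g1 = (\<lambda>z. l ^ n1 * z + tt l a * b1)"
    "b2 \<in> LL l" "g2 = (\<lambda>z. l ^ n2 * z + tt l a * b2)" by blast
  have "g1 \<circ> g2 = (\<lambda>z. l ^ (n1 + n2) * z + tt l a * (l ^ n1 * b2 + b1))"
    unfolding b by (auto simp: fun_eq_iff algebra_simps power_add)
  moreover have "l ^ n1 * b2 + b1 \<in> LL l" by (intro LL_add LL_pow[OF l0 lc] b)
  ultimately show ?case by blast
qed

lemma orbit_eq: assumes l0: "l \<noteq> 0" and lc: "l + 1 / l = of_int c" and l12: "l ^ 12 = 1"
  shows "orbit (GG l a) z = (\<Union>n\<in>{..<12::nat}. (\<lambda>b. l ^ n * z + tt l a * b) ` LL l)"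
proof
  show "orbit (GG l a) z \<subseteq> (\<Union>n\<in>{..<12::nat}. (\<lambda>b. l ^ n * z + tt l a * b) ` LL l)"
  proof
    fix p assume "p \<in> orbit (GG l a) z"
    then obtain g where g: "g \<in> GG l a" "p = g z" unfolding orbit_def by blast
    obtain n b where nb: "b \<in> LL l" "g = (\<lambda>z. l ^ n * z + tt l a * b)" using G_form[OF l0 lc l12 g(1)] by blast
    have "l ^ n = l ^ (n mod 12)"
    proof -
      have "l ^ n = l ^ (12 * (n div 12) + n mod 12)" by simp
      also have "\<dots> = (l ^ 12) ^ (n div 12) * l ^ (n mod 12)" by (simp only: power_add power_mult)
      finally show ?thesis using l12 by simp
    qed
    hence "p = l ^ (n mod 12) * z + tt l a * b" using g nb by simp
    moreover have "n mod 12 \<in> {..<12}" by simp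
    ultimately show "p \<in> (\<Union>n\<in>{..<12::nat}. (\<lambda>b. l ^ n * z + tt l a * b) ` LL l)" using nb(1) by blast
  qed
next
  show "(\<Union>n\<in>{..<12::nat}. (\<lambda>b. l ^ n * z + tt l a * b) ` LL l) \<subseteq> orbit (GG l a) z"
    using orbit_sup[OF l0 LL_Rg] by blast
qed

lemma cd_orbit: assumes nl: "norm l = 1" and lc: "l + 1 / l = of_int c" and l12: "l ^ 12 = 1"
  and t0: "tt l a \<noteq> 0"
  shows "closed_discrete (orbit (GG l a) z)"
proof -
  have l0: "l \<noteq> 0" using nl by auto
  show ?thesis unfolding orbit_eq[OF l0 lc l12]
    by (rule cd_UN) (auto intro: cd_coset[OF nl lc t0])
qed

lemma not_both: assumes "closure A = UNIV" "closed_discrete (A :: complex set)" shows False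
proof -
  have "A = UNIV" using assms unfolding closed_discrete_def by (simp add: closure_closed)
  then obtain e where "e > 0" "ball 0 e = {0::complex}" using assms(2) unfolding closed_discrete_def by auto
  moreover have "complex_of_real (e/2) \<in> ball 0 e" using \<open>e > 0\<close> by simp
  ultimately show False using \<open>e > 0\<close> by simp
qed

theorem theorem3p1:
  fixes \<theta> :: real and a :: complex
  assumes "\<theta> \<notin> {2 * pi * of_int k | k. True}"
    and "a \<noteq> 0"
  defines "h \<equiv> (\<lambda>z. cis \<theta> * z)"
    and "f \<equiv> (\<lambda>z. cis \<theta> * (z - a) + a)"
  defines "G \<equiv> gen_group {h, f}"
  shows "((\<forall>z. closure (orbit G z) = UNIV) \<longleftrightarrow> \<theta> \<notin> H2 \<union> H3)
       \<and> ((\<forall>z. closed_discrete (orbit G z)) \<longleftrightarrow> \<theta> \<in> H2 \<union> H3)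
       \<and> (\<theta> \<in> H2 \<union> H3 \<longleftrightarrow> f \<in> SR1)
       \<and> ((\<forall>z. closure (orbit G z) = UNIV) \<noteq> (\<forall>z. closed_discrete (orbit G z)))"
proof -
  define l where "l = cis \<theta>"
  have G: "G = GG l a" unfolding G_def h_def f_def l_def hh_def ff_def by simp
  have l1: "l \<noteq> 1"
  proof
    assume "l = 1"
    hence "cos \<theta> = 1" unfolding l_def by (metis Re_complex_of_real cis.sel(1) of_real_1)
    then obtain n::int where "\<theta> = n * 2 * pi" by (auto simp: cos_one_2pi_int)
    hence "\<theta> = 2 * pi * of_int n" by simp
    thus False using assms(1) by blast
  qed
  have l0: "l \<noteq> 0" unfolding l_def by simp
  have t0: "tt l a \<noteq> 0"
  proof
    assume "tt l a = 0"
    hence "1 / l = 1" using assms(2) unfolding tt_def by simp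
    thus False using l1 l0 by (simp add: field_simps)
  qed
  have A: "\<forall>z. closure (orbit G z) = UNIV" if nH: "\<theta> \<notin> H2 \<union> H3"
  proof
    fix z
    have sn: "sin \<theta> \<noteq> 0"
    proof
      assume "sin \<theta> = 0"
      then obtain i::int where "\<theta> = i * pi" by (auto simp: sin_zero_iff_int2)
      hence "\<theta> = pi * of_int i" by simp
      hence "\<theta> \<in> H2" unfolding H2_def by blast
      thus False using nH by blast
    qed
    have nc: "\<forall>c::int. 2 * cos \<theta> \<noteq> of_int c" using cos_H nH by blast
    show "closure (orbit G z) = UNIV" unfolding G l_def
      by (rule dense_orbit[OF sn]) (use t0 small_elems[OF nc] l_def in auto)
  qed
  have B: "\<forall>z. closed_discrete (orbit G z)" if yH: "\<theta> \<in> H2 \<union> H3"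
  proof
    fix z
    obtain c::int where c: "2 * cos \<theta> = of_int c" using H_cos[OF yH] by blast
    have lc: "l + 1 / l = of_int c" unfolding l_def cis_sum c by simp
    show "closed_discrete (orbit G z)" unfolding G
      by (rule cd_orbit[OF _ lc _ t0]) (use cis12[OF yH] l_def in auto)
  qed
  have NB: "\<not> (closure (orbit G z) = UNIV \<and> closed_discrete (orbit G z))" for z
    using not_both by blast
  have SR: "\<theta> \<in> H2 \<union> H3 \<longleftrightarrow> f \<in> SR1"
  proof
    assume "\<theta> \<in> H2 \<union> H3"
    hence "cis \<theta> \<in> F2 \<union> F3" unfolding F2_def F3_def by blast
    moreover have "f = aff (cis \<theta>) (a * (1 - cis \<theta>))"
      unfolding f_def aff_def by (auto simp: fun_eq_iff algebra_simps)
    ultimately show "f \<in> SR1" unfolding SR1_def by blast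
  next
    assume "f \<in> SR1"
    then obtain m b where mb: "m \<in> F2 \<union> F3" "f = aff m b" unfolding SR1_def by blast
    have "f 1 - f 0 = m" using mb(2) unfolding aff_def by simp
    moreover have "f 1 - f 0 = cis \<theta>" unfolding f_def by (simp add: algebra_simps)
    ultimately have "cis \<theta> \<in> F2 \<union> F3" using mb(1) by simp
    then obtain x where "x \<in> H2 \<union> H3" "cis \<theta> = cis x" unfolding F2_def F3_def by blast
    thus "\<theta> \<in> H2 \<union> H3" using cis_eq_H by metis
  qed
  show ?thesis
  proof (cases "\<theta> \<in> H2 \<union> H3")
    case True
    thus ?thesis using B[OF True] NB SR by blast
  next
    case False
    thus ?thesis using A[OF False] NB SR by blast
  qed
qed

end
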